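(* Let $k\ge 2$ and let $x_1, x_2, \ldots, x_{c}$ be the Nyldon factorization of $\mathit{TM}_{2k-1}$ (so $c$ is its number of factors). Then the Nyldon factorization of $\mathit{TM}_{2k}$ is $$x_1,\ \ldots,\ x_{c-1},\ x_{c}\cdot\overline{\mathit{TM}_{2k-2}}',\ b\cdot \mathit{TM}_{2k-2},$$ and the Nyldon factorization of $\mathit{TM}_{2k+1}$ is $$x_1,\ \ldots,\ x_{c-1},\ x_{c}\cdot\overline{\mathit{TM}_{2k-2}}',\ b\cdot \mathit{TM}_{2k-2}\cdot\overline{\mathit{TM}_{2k}}.$$ (For instance, the Nyldon factorization of $\mathit{TM}_3$ is $a,b,ba,baab$.)
   Context: Strings are over the binary alphabet $\{a,b\}$ ordered by $a \prec b$, and $\prec$ also denotes the induced lexicographic order on strings: $x \prec y$ iff $x$ is a proper prefix of $y$, or there is $i$ with $x[1..i-1]=y[1..i-1]$ and $x[i]\prec y[i]$; $x\preceq y$ means $x\prec y$ or $x=y$. Nyldon words are defined recursively: every string of length $1$ is a Nyldon word; a string $w$ with $|w|\ge 2$ is a Nyldon word iff there is no factorization $w=\gamma_1\cdots\gamma_m$ with $m\ge 2$, each $\gamma_i$ a nonempty Nyldon word, and $\gamma_1\preceq\gamma_2\preceq\cdots\preceq\gamma_m$. Every nonempty string $w$ has a unique factorization $w=\gamma_1\cdots\gamma_m$ into Nyldon words with $\gamma_i\preceq\gamma_{i+1}$ for all $i$; it is called the Nyldon factorization of $w$. For a binary string $w$, $\overline{w}$ is obtained by exchanging $a$ and $b$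 letterwise, and $w'=w[1..|w|-1]$ is $w$ with its last letter removed; $\overline{w}'$ means $(\overline{w})'$. Thue–Morse words: $\mathit{TM}_0=a$ and $\mathit{TM}_k=\mathit{TM}_{k-1}\cdot\overline{\mathit{TM}_{k-1}}$ for $k\ge1$. *)

theory Defs
  imports Main
begin

datatype letter = a | b

fun flip :: "letter \<Rightarrow> letter" where
  "flip a = b" | "flip b = a"

definition compl :: "letter list \<Rightarrow> letter list" where
  "compl w = map flip w"

definition lex_less :: "letter list \<Rightarrow> letter list \<Rightarrow> bool" where
  "lex_less x y \<longleftrightarrow>
     (\<exists>u. u \<noteq> [] \<and> y = x @ u) \<or>
     (\<exists>p s t. x = p @ [a] @ s \<and> y = p @ [b] @ t)"

definition lex_le :: "letter list \<Rightarrow> letter list \<Rightarrow> bool" where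
  "lex_le x y \<longleftrightarrow> lex_less x y \<or> x = y"

text \<open>Nyldon words of length at most n, defined by recursion on n
  (all factors of a factorization with at least 2 nonempty factors are shorter).\<close>
fun nyl_upto :: "nat \<Rightarrow> letter list set" where
  "nyl_upto 0 = {}"
| "nyl_upto (Suc n) = nyl_upto n \<union>
     {w. length w = Suc n \<and>
         (length w = 1 \<or>
          \<not> (\<exists>fs. length fs \<ge> 2 \<and> concat fs = w \<and>
                  (\<forall>g\<in>set fs. g \<noteq> [] \<and> g \<in> nyl_upto n) \<and>
                  successively lex_le fs))}"

definition nyldon :: "letter list \<Rightarrow> bool" where
  "nyldon w \<longleftrightarrow> w \<in> nyl_upto (length w)"

definition is_nyldon_fact :: "letter list \<Rightarrow> letter list list \<Rightarrow> bool" where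
  "is_nyldon_fact w fs \<longleftrightarrow>
     concat fs = w \<and> (\<forall>g\<in>set fs. g \<noteq> [] \<and> nyldon g) \<and> successively lex_le fs"

fun TM :: "nat \<Rightarrow> letter list" where
  "TM 0 = [a]"
| "TM (Suc n) = TM n @ compl (TM n)"

end

theory Submission
  imports Defs
begin


section \<open>Lexicographic order\<close>

lemma lex_less_Nil_left[simp]: "lex_less [] y \<longleftrightarrow> y \<noteq> []"
  unfolding lex_less_def by auto

lemma lex_less_Nil_right[simp]: "\<not> lex_less x []"
  unfolding lex_less_def by auto

lemma lex_less_Cons_Cons[simp]:
  "lex_less (x#xs) (y#ys) \<longleftrightarrow> (x = a \<and> y = b) \<or> (x = y \<and> lex_less xs ys)"
proof
  assume "lex_less (x#xs) (y#ys)"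
  then consider u where "u \<noteq> []" "y#ys = (x#xs) @ u"
    | p s t where "x#xs = p @ [a] @ s" "y#ys = p @ [b] @ t"
    unfolding lex_less_def by blast
  then show "(x = a \<and> y = b) \<or> (x = y \<and> lex_less xs ys)"
  proof cases
    case 1 then show ?thesis unfolding lex_less_def by auto
  next
    case (2 p s t)
    show ?thesis
    proof (cases p)
      case Nil then show ?thesis using 2 by auto
    next
      case (Cons z p')
      then have "x = y" "xs = p' @ [a] @ s" "ys = p' @ [b] @ t" using 2 by auto
      then show ?thesis unfolding lex_less_def by blast
    qed
  qed
next
  assume "(x = a \<and> y = b) \<or> (x = y \<and> lex_less xs ys)"
  then show "lex_less (x#xs) (y#ys)"
  proof
    assume "x = a \<and> y = b"
    then show ?thesis unfolding lex_less_def
      by (metis append_Cons append_Nil)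
  next
    assume h: "x = y \<and> lex_less xs ys"
    then consider u where "u \<noteq> []" "ys = xs @ u"
    | p s t where "xs = p @ [a] @ s" "ys = p @ [b] @ t"
      unfolding lex_less_def by blast
    then show ?thesis
    proof cases
      case 1 then show ?thesis using h unfolding lex_less_def by auto
    next
      case (2 p s t)
      then have "x#xs = (x#p) @ [a] @ s" "y#ys = (x#p) @ [b] @ t" using h by auto
      then show ?thesis unfolding lex_less_def by blast
    qed
  qed
qed

lemma lex_less_irrefl[simp]: "\<not> lex_less x x"
  by (induction x) auto

lemma lex_less_trans: "lex_less x y \<Longrightarrow> lex_less y z \<Longrightarrow> lex_less x z"
proof (induction x arbitrary: y z)
  case Nil then show ?case by (cases z) auto
next
  case (Cons x xs)
  then obtain y1 ys where y: "y = y1 # ys" by (cases y) auto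
  from Cons obtain z1 zs where z: "z = z1 # zs" by (cases z) auto
  show ?case using Cons.prems Cons.IH[of ys zs] unfolding y z
    by (cases x; cases y1; cases z1) auto
qed

lemma lex_less_total: "x \<noteq> y \<Longrightarrow> lex_less x y \<or> lex_less y x"
proof (induction x arbitrary: y)
  case Nil then show ?case by auto
next
  case (Cons x xs)
  show ?case
  proof (cases y)
    case Nil then show ?thesis by auto
  next
    case (Cons y1 ys)
    then show ?thesis using Cons.prems Cons.IH[of ys]
      by (cases x; cases y1) auto
  qed
qed

lemma lex_less_asym: "lex_less x y \<Longrightarrow> \<not> lex_less y x"
  using lex_less_trans lex_less_irrefl by blast

lemma lex_less_prefix: "y \<noteq> [] \<Longrightarrow> lex_less x (x @ y)"
  unfolding lex_less_def by auto

lemma lex_less_append_left[simp]: "lex_less (p @ x) (p @ y) \<longleftrightarrow> lex_less x y"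
  by (induction p) auto

lemma lex_less_append_right: "lex_less v u \<Longrightarrow> lex_less v (u @ z)"
proof (induction v arbitrary: u)
  case Nil then show ?case by auto
next
  case (Cons x xs)
  then obtain y ys where u: "u = y # ys" by (cases u) auto
  show ?case using Cons unfolding u by auto
qed

lemma lex_less_diff: "lex_less (p @ a # x) (p @ b # y)"
  by simp

lemma lex_le_refl[simp]: "lex_le x x"
  unfolding lex_le_def by simp

lemma lex_le_trans: "lex_le x y \<Longrightarrow> lex_le y z \<Longrightarrow> lex_le x z"
  unfolding lex_le_def using lex_less_trans by blast

lemma lex_le_less_trans: "lex_le x y \<Longrightarrow> lex_less y z \<Longrightarrow> lex_less x z"
  unfolding lex_le_def using lex_less_trans by blast

lemma lex_less_le_trans: "lex_less x y \<Longrightarrow> lex_le y z \<Longrightarrow> lex_less x z"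
  unfolding lex_le_def using lex_less_trans by blast

lemma lex_less_imp_le: "lex_less x y \<Longrightarrow> lex_le x y"
  unfolding lex_le_def by simp

lemma lex_le_prefix: "lex_le x (x @ y)"
  unfolding lex_le_def using lex_less_prefix by (cases y) auto

lemma not_lex_le_if_less: "lex_less y x \<Longrightarrow> \<not> lex_le x y"
  unfolding lex_le_def using lex_less_asym by auto

section \<open>Nyldon basics\<close>

lemma nyl_upto_len: "w \<in> nyl_upto n \<Longrightarrow> w \<noteq> [] \<and> length w \<le> n"
  by (induction n) auto

lemma nyl_upto_iff: "w \<in> nyl_upto n \<longleftrightarrow> nyldon w \<and> length w \<le> n"
proof (induction n)
  case 0 then show ?case using nyl_upto_len by (auto simp: nyldon_def)
next
  case (Suc n)
  show ?case
  proof (cases "length w = Suc n")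
    case True
    then show ?thesis using Suc nyl_upto_len[of w n] by (auto simp: nyldon_def)
  next
    case False
    have "w \<in> nyl_upto (Suc n) \<longleftrightarrow> w \<in> nyl_upto n" using False by auto
    then show ?thesis using Suc False by auto
  qed
qed

lemma nyldon_nonempty: "nyldon w \<Longrightarrow> w \<noteq> []"
  unfolding nyldon_def using nyl_upto_len by blast

lemma concat_len_lt:
  assumes "length fs \<ge> 2" "\<forall>g\<in>set fs. g \<noteq> []" "g \<in> set fs"
  shows "length g < length (concat fs)"
proof -
  obtain xs ys where fs: "fs = xs @ g # ys" using assms(3) by (meson split_list)
  have "xs \<noteq> [] \<or> ys \<noteq> []" using assms(1) fs by auto
  then have "concat xs \<noteq> [] \<or> concat ys \<noteq> []" using assms(2) fs by auto
  then show ?thesis using fs by auto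
qed

definition SF :: "letter list \<Rightarrow> letter list list \<Rightarrow> bool" where
  "SF w fs \<longleftrightarrow> concat fs = w \<and> (\<forall>g\<in>set fs. nyldon g) \<and> successively lex_le fs"

lemma SF_iff: "is_nyldon_fact w fs \<longleftrightarrow> SF w fs"
  unfolding is_nyldon_fact_def SF_def using nyldon_nonempty by blast

lemma nyldon_iff:
  "nyldon w \<longleftrightarrow> w \<noteq> [] \<and> (length w = 1 \<or>
     \<not> (\<exists>fs. length fs \<ge> 2 \<and> SF w fs))"
proof (cases w)
  case Nil then show ?thesis using nyldon_nonempty by auto
next
  case (Cons x xs)
  then obtain n where n: "length w = Suc n" by auto
  have eq: "(\<exists>fs. length fs \<ge> 2 \<and> concat fs = w \<and>
              (\<forall>g\<in>set fs. g \<noteq> [] \<and> g \<in> nyl_upto n) \<and> successively lex_le fs)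
        \<longleftrightarrow> (\<exists>fs. length fs \<ge> 2 \<and> SF w fs)"
  proof
    assume "\<exists>fs. length fs \<ge> 2 \<and> concat fs = w \<and>
              (\<forall>g\<in>set fs. g \<noteq> [] \<and> g \<in> nyl_upto n) \<and> successively lex_le fs"
    then show "\<exists>fs. length fs \<ge> 2 \<and> SF w fs"
      unfolding SF_def using nyl_upto_iff by blast
  next
    assume "\<exists>fs. length fs \<ge> 2 \<and> SF w fs"
    then obtain fs where fs: "length fs \<ge> 2" "SF w fs" by blast
    have "\<forall>g\<in>set fs. g \<noteq> [] \<and> g \<in> nyl_upto n"
    proof
      fix g assume g: "g \<in> set fs"
      have ne: "\<forall>g\<in>set fs. g \<noteq> []" using fs(2) nyldon_nonempty unfolding SF_def by blast
      have "length g < length w" using concat_len_lt[OF fs(1) ne g] fs(2) unfolding SF_def by simp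
      then show "g \<noteq> [] \<and> g \<in> nyl_upto n" using ne g fs(2) n nyl_upto_iff unfolding SF_def by auto
    qed
    then show "\<exists>fs. length fs \<ge> 2 \<and> concat fs = w \<and>
              (\<forall>g\<in>set fs. g \<noteq> [] \<and> g \<in> nyl_upto n) \<and> successively lex_le fs"
      using fs unfolding SF_def by blast
  qed
  have "nyldon w \<longleftrightarrow> w \<in> nyl_upto (Suc n)" unfolding nyldon_def n ..
  also have "\<dots> \<longleftrightarrow> (length w = 1 \<or> \<not> (\<exists>fs. length fs \<ge> 2 \<and> concat fs = w \<and>
              (\<forall>g\<in>set fs. g \<noteq> [] \<and> g \<in> nyl_upto n) \<and> successively lex_le fs))"
    using n nyl_upto_len[of w n] by auto
  finally show ?thesis using eq Cons by auto
qed

lemma nyldon_letter[simp]: "nyldon [x]"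
  using nyldon_iff by auto

lemma SF_exists: "\<exists>fs. SF w fs"
proof (cases "w = []")
  case True then show ?thesis unfolding SF_def by (intro exI[of _ "[]"]) auto
next
  case False
  show ?thesis
  proof (cases "nyldon w")
    case True then show ?thesis unfolding SF_def by (intro exI[of _ "[w]"]) auto
  next
    case False
    then show ?thesis using \<open>w \<noteq> []\<close> nyldon_iff by blast
  qed
qed

lemma SF_nonempty: "SF w fs \<Longrightarrow> w \<noteq> [] \<Longrightarrow> fs \<noteq> []"
  unfolding SF_def by auto

lemma SF_Nil_iff: "SF [] fs \<longleftrightarrow> fs = []"
  unfolding SF_def using nyldon_nonempty by auto

lemma SF_nyldon: "nyldon w \<Longrightarrow> SF w fs \<Longrightarrow> fs = [w]"
proof -
  assume n: "nyldon w" and s: "SF w fs"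
  have ne: "fs \<noteq> []" using SF_nonempty[OF s] nyldon_nonempty[OF n] .
  have "\<not> length fs \<ge> 2"
  proof
    assume l: "length fs \<ge> 2"
    then have "length w \<noteq> 1"
    proof -
      obtain x y r where "fs = x # y # r" using l by (cases fs; cases "tl fs") auto
      then have "length w \<ge> length x + length y" using s unfolding SF_def by auto
      moreover have "x \<noteq> [] \<and> y \<noteq> []" using s \<open>fs = x # y # r\<close> nyldon_nonempty unfolding SF_def by auto
      ultimately show ?thesis by (cases x; cases y) auto
    qed
    then show False using n nyldon_iff l s by blast
  qed
  then obtain g where "fs = [g]" using ne by (cases fs; cases "tl fs") auto
  then show ?thesis using s unfolding SF_def by auto
qed

lemma SF_append: "SF u fs \<Longrightarrow> SF v gs \<Longrightarrow> (fs = [] \<or> gs = [] \<or> lex_le (last fs) (hd gs)) \<Longrightarrow> SF (u @ v) (fs @ gs)"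
  unfolding SF_def by (auto simp: successively_append_iff)

lemma SF_single: "nyldon w \<Longrightarrow> SF w [w]"
  unfolding SF_def by auto

lemma SF_snoc: "SF w (fs @ [f]) \<longleftrightarrow> SF (concat fs) fs \<and> nyldon f \<and> w = concat fs @ f \<and> (fs = [] \<or> lex_le (last fs) f)"
  unfolding SF_def by (auto simp: successively_append_iff)

lemma SF_Cons: "SF w (f # fs) \<longleftrightarrow> nyldon f \<and> SF (concat fs) fs \<and> w = f @ concat fs \<and> (fs = [] \<or> lex_le f (hd fs))"
  unfolding SF_def by (auto simp: successively_Cons)

lemma SF_last:
  assumes "SF w hs" "hs \<noteq> []"
  shows "w = concat (butlast hs) @ last hs \<and> nyldon (last hs) \<and> SF (concat (butlast hs)) (butlast hs)
     \<and> (butlast hs = [] \<or> lex_le (last (butlast hs)) (last hs))"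
proof -
  have "hs = butlast hs @ [last hs]" using assms(2) by simp
  then have "SF w (butlast hs @ [last hs])" using assms(1) by simp
  then show ?thesis unfolding SF_snoc by blast
qed

lemma len_in_concat: "f \<in> set fs \<Longrightarrow> length f \<le> length (concat fs)"
  by (induction fs) auto

definition good :: "letter list \<Rightarrow> bool" where
  "good g \<longleftrightarrow> (\<forall>p h. g = p @ h \<longrightarrow> p \<noteq> [] \<longrightarrow> nyldon h \<longrightarrow> lex_less h g)"

lemma Key_good:
  assumes "SF w gs" "gs \<noteq> []" "\<forall>g\<in>set gs. good g" "nyldon s" "w = p @ s"
  shows "\<exists>q. last gs = q @ s"
  using assms
proof (induction gs arbitrary: w p)
  case Nil then show ?case by simp
next
  case (Cons g rest)
  show ?case
  proof (cases "rest = []")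
    case True
    have "w = g" using Cons.prems(1) True unfolding SF_def by simp
    then show ?thesis using Cons.prems(5) True by auto
  next
    case False
    have sfr: "SF (concat rest) rest" and ng: "nyldon g" and w: "w = g @ concat rest"
      and le: "lex_le g (hd rest)"
      using Cons.prems(1) False unfolding SF_Cons by auto
    have IH: "\<And>p'. concat rest = p' @ s \<Longrightarrow> \<exists>q. last rest = q @ s"
      using Cons.IH[OF sfr False] Cons.prems(3,4) by auto
    from Cons.prems(5) w have "g @ concat rest = p @ s" by simp
    then obtain us where us: "(g = p @ us \<and> us @ concat rest = s) \<or> (g @ us = p \<and> concat rest = us @ s)"
      unfolding append_eq_append_conv2 by blast
    then show ?thesis
    proof
      assume "g @ us = p \<and> concat rest = us @ s"
      then show ?thesis using IH False by auto
    next
      assume h: "g = p @ us \<and> us @ concat rest = s"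
      show ?thesis
      proof (cases "us = []")
        case True then show ?thesis using IH h False by auto
      next
        case usne: False
        show ?thesis
        proof (cases "p = []")
          case True
          then have "SF s (g # rest)" using h Cons.prems(1) w by simp
          then have "g # rest = [s]" using SF_nyldon Cons.prems(4) by blast
          then show ?thesis using False by simp
        next
          case pne: False
          obtain hs where hs: "SF us hs" using SF_exists by blast
          have hsne: "hs \<noteq> []" using SF_nonempty[OF hs usne] .
          note L = SF_last[OF hs hsne]
          have "g = (p @ concat (butlast hs)) @ last hs" using h L by simp
          have "good g" using Cons.prems(3) by simp
          then have "lex_less (last hs) g" using pne L unfolding good_def
            by (metis \<open>g = (p @ concat (butlast hs)) @ last hs\<close> append_is_Nil_conv)
          then have "lex_le (last hs) (hd rest)" using le lex_less_le_trans lex_less_imp_le by blast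
          then have "SF s (hs @ rest)" using SF_append[OF hs sfr] h by auto
          then have "hs @ rest = [s]" using SF_nyldon Cons.prems(4) by blast
          then show ?thesis using hsne False by (cases hs) auto
        qed
      qed
    qed
  qed
qed

lemma all_good: "nyldon g \<Longrightarrow> good g"
proof (induction "length g" arbitrary: g rule: less_induct)
  case less
  show ?case unfolding good_def
  proof (intro allI impI)
    fix p h assume gph: "g = p @ h" and pne: "p \<noteq> []" and nh: "nyldon h"
    show "lex_less h g"
    proof (rule ccontr)
      assume nl: "\<not> lex_less h g"
      have "h \<noteq> g" using gph pne by auto
      then have gh: "lex_less g h" using nl lex_less_total by blast
      obtain x p' where p: "p = x # p'" using pne by (cases p) auto
      define s where "s = p' @ h"
      have gs_: "g = x # s" using gph p s_def by simp
      have sne: "s \<noteq> []" using nh nyldon_nonempty s_def by auto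
      obtain gs where sf: "SF s gs" using SF_exists by blast
      have gsne: "gs \<noteq> []" using SF_nonempty[OF sf sne] .
      have gd: "\<forall>f\<in>set gs. good f"
      proof
        fix f assume f: "f \<in> set gs"
        have "length f \<le> length (concat gs)" using f by (rule len_in_concat)
        then have "length f \<le> length s" using sf unfolding SF_def by simp
        then have "length f < length g" using gs_ by simp
        moreover have "nyldon f" using sf f unfolding SF_def by blast
        ultimately show "good f" using less by blast
      qed
      obtain q where q: "last gs = q @ h" using Key_good[OF sf gsne gd nh, of p'] s_def by blast
      define gm where "gm = last gs"
      note L = SF_last[OF sf gsne]
      have ngm: "nyldon gm" using L gm_def by simp
      have ggm: "lex_less g gm"
      proof (cases "q = []")
        case True then show ?thesis using q gh gm_def by simp
      next
        case False
        have "good gm" using gd gsne gm_def by simp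
        then have "lex_less h gm" using q False nh gm_def unfolding good_def by blast
        then show ?thesis using gh lex_less_trans by blast
      qed
      define Q where "Q = x # concat (butlast gs)"
      have gQ: "g = Q @ gm" using gs_ L Q_def gm_def by simp
      obtain fs where fs: "SF Q fs" using SF_exists by blast
      have fsne: "fs \<noteq> []" using SF_nonempty[OF fs] Q_def by simp
      note LF = SF_last[OF fs fsne]
      have fle: "lex_le (last fs) gm"
      proof (cases "butlast fs = []")
        case True
        then have "last fs = Q" using LF by simp
        moreover have "lex_le Q g" using gQ lex_le_prefix by simp
        ultimately show ?thesis using ggm lex_le_less_trans lex_less_imp_le by blast
      next
        case False
        have "concat (butlast fs) \<noteq> []"
        proof -
          obtain f0 where "f0 \<in> set (butlast fs)" using False by (cases "butlast fs") auto
          moreover have "\<forall>f\<in>set (butlast fs). nyldon f" using LF unfolding SF_def by blast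
          ultimately show ?thesis using nyldon_nonempty by auto
        qed
        then obtain y r where cb: "concat (butlast fs) = y # r" by (cases "concat (butlast fs)") auto
        have eq: "concat (butlast gs) = r @ last fs" using LF cb Q_def by simp
        have lfne: "last fs \<noteq> []" using LF nyldon_nonempty by blast
        have bgne: "butlast gs \<noteq> []" using eq lfne by auto
        have gd2: "\<forall>f\<in>set (butlast gs). good f" using gd by (meson in_set_butlastD)
        obtain q' where q': "last (butlast gs) = q' @ last fs"
          using Key_good[OF _ bgne gd2 _ eq] L LF by blast
        have le2: "lex_le (last (butlast gs)) gm" using L bgne gm_def by simp
        have "lex_le (last fs) (last (butlast gs))"
        proof (cases "q' = []")
          case True then show ?thesis using q' by simp
        next
          case False
          have "good (last (butlast gs))" using gd2 bgne by simp
          then show ?thesis using q' False LF unfolding good_def lex_le_def by blast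
        qed
        then show ?thesis using le2 lex_le_trans by blast
      qed
      have cfs: "concat fs = Q" using fs unfolding SF_def by simp
      have "SF g (fs @ [gm])" unfolding SF_snoc using fs cfs fle ngm gQ by simp
      then have "fs @ [gm] = [g]" using SF_nyldon less.prems by blast
      then show False using fsne by (cases fs) auto
    qed
  qed
qed

lemma Key:
  assumes "SF w gs" "gs \<noteq> []" "nyldon s" "w = p @ s"
  shows "\<exists>q. last gs = q @ s"
  using Key_good[OF assms(1,2) _ assms(3,4)] assms(1) all_good unfolding SF_def by blast

lemma SF_unique: "SF w fs \<Longrightarrow> SF w gs \<Longrightarrow> fs = gs"
proof (induction fs arbitrary: w gs rule: rev_induct)
  case Nil then show ?case using SF_Nil_iff unfolding SF_def by auto
next
  case (snoc f fs)
  have wne: "w \<noteq> []" using snoc.prems(1) nyldon_nonempty unfolding SF_snoc by auto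
  have gsne: "gs \<noteq> []" using SF_nonempty[OF snoc.prems(2) wne] .
  have A: "SF (concat fs) fs" "nyldon f" "w = concat fs @ f" using snoc.prems(1) unfolding SF_snoc by auto
  note L = SF_last[OF snoc.prems(2) gsne]
  obtain q where q: "last gs = q @ f" using Key[OF snoc.prems(2) gsne A(2) A(3)] by blast
  have "SF w (fs @ [f])" using snoc.prems(1) .
  then obtain q' where q': "last (fs @ [f]) = q' @ last gs"
    using Key[of w "fs @ [f]" "last gs" "concat (butlast gs)"] L by auto
  have fe: "last gs = f" using q q' by simp
  have "concat (butlast gs) = concat fs" using L A fe by simp
  then have "fs = butlast gs" using snoc.IH[OF A(1)] L by simp
  then show ?case using fe gsne by (metis append_butlast_last_id)
qed



lemma lex_less_self_append[simp]: "lex_less x (x @ y) \<longleftrightarrow> y \<noteq> []"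
  using lex_less_prefix[of y x] lex_less_append_left[of x "[]" y] by auto

definition std_is :: "letter list \<Rightarrow> letter list \<Rightarrow> bool" where
  "std_is u g \<longleftrightarrow> (\<exists>hs. SF (tl u) hs \<and> hs \<noteq> [] \<and> last hs = g)"

lemma ML2:
  assumes nu: "nyldon u" and nv: "nyldon v" and vu: "lex_less v u"
    and fit: "length u = 1 \<or> (\<exists>h. std_is u h \<and> lex_le h v)"
  shows "nyldon (u @ v) \<and> std_is (u @ v) v"
proof -
  have une: "u \<noteq> []" using nu nyldon_nonempty by blast
  obtain hs0 where hs0: "SF (tl u) hs0" "hs0 = [] \<or> lex_le (last hs0) v"
  proof (cases "length u = 1")
    case True
    then have "tl u = []" by (cases u) auto
    then show ?thesis using that[of "[]"] SF_Nil_iff by auto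
  next
    case False
    then obtain h hs where "SF (tl u) hs" "hs \<noteq> []" "last hs = h" "lex_le h v"
      using fit unfolding std_is_def by blast
    then show ?thesis using that by blast
  qed
  have tlu: "tl (u @ v) = tl u @ v" using une by simp
  have sft: "SF (tl (u @ v)) (hs0 @ [v])"
    unfolding tlu by (rule SF_append[OF hs0(1) SF_single[OF nv]]) (use hs0(2) in auto)
  have std: "std_is (u @ v) v" unfolding std_is_def using sft by (intro exI[of _ "hs0 @ [v]"]) auto
  have "nyldon (u @ v)"
  proof -
    have "\<not> (\<exists>fs. length fs \<ge> 2 \<and> SF (u @ v) fs)"
    proof
      assume "\<exists>fs. length fs \<ge> 2 \<and> SF (u @ v) fs"
      then obtain fs where fs: "length fs \<ge> 2" "SF (u @ v) fs" by blast
      obtain e1 rest where fse: "fs = e1 # rest" using fs(1) by (cases fs) auto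
      have restne: "rest \<noteq> []" using fs(1) fse by auto
      have C: "nyldon e1" "SF (concat rest) rest" "u @ v = e1 @ concat rest" "lex_le e1 (hd rest)"
        using fs(2) restne unfolding fse SF_Cons by auto
      have e1ne: "e1 \<noteq> []" using C(1) nyldon_nonempty by blast
      have tl2: "tl (u @ v) = tl e1 @ concat rest" using C(3) e1ne by (cases e1) auto
      obtain ks where ks: "SF (tl e1) ks" using SF_exists by blast
      have kle: "ks = [] \<or> lex_le (last ks) (hd rest)"
      proof (cases "ks = []")
        case True then show ?thesis by simp
      next
        case False
        note L = SF_last[OF ks False]
        have "e1 = ([hd e1] @ concat (butlast ks)) @ last ks" using L e1ne by (cases e1) auto
        then have "lex_less (last ks) e1" using all_good[OF C(1)] L unfolding good_def by blast
        then show ?thesis using C(4) lex_less_le_trans lex_less_imp_le by blast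
      qed
      have "SF (tl (u @ v)) (ks @ rest)" unfolding tl2 by (rule SF_append[OF ks C(2) ]) (use kle in auto)
      then have eq: "ks @ rest = hs0 @ [v]" using SF_unique sft by blast
      then have lr: "last rest = v" using restne by (metis last_appendR last_snoc)
      note L2 = SF_last[OF fs(2)]
      have "fs \<noteq> []" using fse by simp
      then have "concat (butlast fs) = u" using L2 fse lr restne by auto
      then have "SF u (butlast fs)" using SF_last[OF fs(2)] fse by auto
      then have "butlast fs = [u]" using SF_nyldon nu by blast
      then have "fs = [u, v]" using fse lr restne by (metis append_butlast_last_id append_Cons append_Nil last.simps list.distinct(1))
      then have "lex_le u v" using fs(2) unfolding SF_def by simp
      then show False using vu not_lex_le_if_less by blast
    qed
    then show ?thesis using nyldon_iff une by auto
  qed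
  then show ?thesis using std by blast
qed

section \<open>Thue--Morse\<close>

lemma flip_flip[simp]: "flip (flip x) = x" by (cases x) auto

lemma compl_append[simp]: "compl (x @ y) = compl x @ compl y" unfolding compl_def by simp
lemma compl_compl[simp]: "compl (compl x) = x" unfolding compl_def by (simp add: comp_def)
lemma compl_Cons[simp]: "compl (x # y) = flip x # compl y" unfolding compl_def by simp
lemma compl_Nil[simp]: "compl [] = []" unfolding compl_def by simp

definition tt :: "nat \<Rightarrow> letter list" where "tt i = TM (2*i)"
definition cc :: "nat \<Rightarrow> letter list" where "cc i = compl (TM (2*i))"
definition cp :: "nat \<Rightarrow> letter list" where "cp i = butlast (cc i)"

lemma TM_Suc_Suc: "TM (Suc (Suc n)) = TM n @ compl (TM n) @ compl (TM n) @ TM n"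
  by simp

lemma tt_Suc: "tt (Suc i) = tt i @ cc i @ cc i @ tt i"
  unfolding tt_def cc_def by (simp add: TM_Suc_Suc)

lemma cc_Suc: "cc (Suc i) = cc i @ tt i @ tt i @ cc i"
  unfolding tt_def cc_def by (simp add: TM_Suc_Suc)

lemma tt_0: "tt 0 = [a]" unfolding tt_def by simp
lemma cc_0: "cc 0 = [b]" unfolding cc_def by simp

lemma tt_hd: "\<exists>r. tt i = a # r"
  by (induction i) (auto simp: tt_0 tt_Suc)

lemma cc_hd: "\<exists>r. cc i = b # r"
  by (induction i) (auto simp: cc_0 cc_Suc)

lemma cc_last: "cc i = cp i @ [b]"
proof -
  have "cc i \<noteq> [] \<and> last (cc i) = b"
    by (induction i) (auto simp: cc_0 cc_Suc)
  then show ?thesis unfolding cp_def by (metis append_butlast_last_id)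
qed

lemma cp_Suc: "cp (Suc i) = cc i @ tt i @ tt i @ cp i"
  unfolding cp_def cc_Suc using cc_hd[of i] by (auto simp: butlast_append)

lemma tt_Suc_hd: "\<exists>r. tt (Suc i) = a # b # r"
proof (induction i)
  case 0 then show ?case by (auto simp: tt_Suc tt_0 cc_0)
next
  case (Suc i)
  then show ?case by (auto simp: tt_Suc[of "Suc i"])
qed

lemma cp_hd: "i \<ge> 1 \<Longrightarrow> \<exists>q. cp i = b # q"
  using cc_hd[of "i - 1"] cp_Suc[of "i - 1"] by (cases i) auto

lemma tt_1: "tt 1 = [a,b,b,a]" by (simp add: tt_Suc[of 0, simplified] tt_0 cc_0)
lemma cc_1: "cc 1 = [b,a,a,b]" by (simp add: cc_Suc[of 0, simplified] tt_0 cc_0)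
lemma cp_1: "cp 1 = [b,a,a]" unfolding cp_def cc_1 by simp



definition "Uf i = b # tt i @ cc i @ cp i"
definition "Qf i = b # tt i"
definition "Vf i = b # tt i @ cp i"
definition "Lf i = b # tt i @ cc i @ tt i @ tt i @ cc i"
definition "Sf i = b # tt i @ cc i @ tt i @ tt i @ cp i"
definition "Wf i = b # tt i @ tt i @ cc i"
definition "Rf i = b # tt i @ tt i @ cp i"
definition "Zf i = b # tt i @ tt i @ cc i @ cp i"
definition "Yf i = b # tt i @ tt i @ cc i @ cc i @ tt i @ tt i @ cp i"
definition "Pv i = b # tt i @ cc i @ tt i @ tt i @ cc i @ cc i @ tt i @ tt i @ cp i"
definition "Xf i = Uf i @ Zf i"
definition "P i = (if i = 1 then [b,a,a,b,b,a,a] else Pv (i - 1))"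

lemmas fam_defs = Uf_def Qf_def Vf_def Lf_def Sf_def Wf_def Rf_def Zf_def Yf_def Pv_def Xf_def

lemma fam_ids:
  "Uf (Suc i) = Uf i @ Pv i"
  "Qf (Suc i) = Uf i @ Qf i"
  "Vf (Suc i) = Uf i @ Sf i"
  "Wf (Suc i) = Xf i @ Lf i"
  "Rf (Suc i) = Xf i @ Sf i"
  "Zf (Suc i) = Xf i @ Pv i"
  "Lf i = Vf i @ Wf i"
  "Sf i = Vf i @ Rf i"
  "Yf i = Zf i @ Rf i"
  "Pv i = Vf i @ Yf i"
  unfolding fam_defs by (simp_all add: tt_Suc cc_Suc cp_Suc cc_last)

lemma shapes1:
  assumes "i \<ge> 1"
  obtains r q where "tt i = a # r" "cp i = b # q" "cc i = b # q @ [b]"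
proof -
  obtain r where r: "tt i = a # r" using tt_hd by blast
  obtain q where q: "cp i = b # q" using cp_hd[OF assms] by blast
  have "cc i = b # q @ [b]" using cc_last[of i] q by simp
  then show ?thesis using that r q by blast
qed

lemma cmp_all:
  assumes "i \<ge> 1"
  shows "lex_less (Wf i) (Vf i)" "lex_less (Rf i) (Vf i)" "lex_less (Rf i) (Zf i)"
    "lex_less (Yf i) (Vf i)" "lex_less (Zf i) (Uf i)" "lex_less (Lf i) (Xf i)"
    "lex_less (Sf i) (Xf i)" "lex_less (Pv i) (Xf i)"
    "lex_less (Zf i) (Lf i)" "lex_less (Zf i) (Sf i)" "lex_less (Zf i) (Pv i)"
    "lex_less (Pv i) (Uf i)" "lex_less (Qf i) (Uf i)" "lex_less (Sf i) (Uf i)"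
proof -
  obtain r q where h: "tt i = a # r" "cp i = b # q" "cc i = b # q @ [b]" using shapes1[OF assms] by blast
  show "lex_less (Wf i) (Vf i)" "lex_less (Rf i) (Vf i)" "lex_less (Rf i) (Zf i)"
    "lex_less (Yf i) (Vf i)" "lex_less (Zf i) (Uf i)" "lex_less (Lf i) (Xf i)"
    "lex_less (Sf i) (Xf i)" "lex_less (Pv i) (Xf i)"
    "lex_less (Zf i) (Lf i)" "lex_less (Zf i) (Sf i)" "lex_less (Zf i) (Pv i)"
    "lex_less (Pv i) (Uf i)" "lex_less (Qf i) (Uf i)" "lex_less (Sf i) (Uf i)"
    unfolding fam_defs h by simp_all
qed

lemma P_lt:
  assumes "i \<ge> 1"
  shows "lex_less (P i) (b # tt i @ y)"
proof (cases "i = 1")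
  case True then show ?thesis using tt_1 by (simp add: P_def)
next
  case False
  then obtain m where m: "i = Suc m" "m \<ge> 1" using assms by (cases i) auto
  obtain r q where "tt m = a # r" "cc m = b # q" using tt_hd cc_hd by blast
  then show ?thesis using m by (simp add: P_def Pv_def tt_Suc)
qed

lemma S_lt: "lex_less (Sf i) (b # tt (Suc i) @ y)"
proof -
  obtain r q where "tt i = a # r" "cc i = b # q" using tt_hd cc_hd by blast
  then show ?thesis by (simp add: Sf_def tt_Suc)
qed

lemma baa_lt: "lex_less [b,a,a] (b # tt (Suc i) @ y)"
  using tt_Suc_hd[of i] by auto

lemma ML2':
  assumes "nyldon u" "std_is u h" "lex_le h v" "nyldon v" "lex_less v u" "w = u @ v"
  shows "nyldon w \<and> std_is w v"
  using ML2[OF assms(1,4,5)] assms by blast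

lemma ML2l:
  assumes "u = [x]" "nyldon v" "lex_less v u" "w = u @ v"
  shows "nyldon w \<and> std_is w v"
  using ML2[of u v] assms by simp

lemma step_common:
  assumes "i \<ge> 1" "nyldon (Vf i)" "std_is (Vf i) h" "lex_le h (Wf i)" "lex_le h (Rf i)" "lex_le h (Yf i)"
    "nyldon (Wf i)" "nyldon (Rf i)" "nyldon (Zf i)" "std_is (Zf i) (P i)" "lex_le (P i) (Rf i)"
  shows "nyldon (Lf i) \<and> nyldon (Sf i) \<and> nyldon (Pv i)"
proof -
  note c = cmp_all[OF assms(1)]
  have L: "nyldon (Lf i)" using ML2'[OF assms(2,3,4,7) c(1) fam_ids(7)] by blast
  have S: "nyldon (Sf i)" using ML2'[OF assms(2,3,5,8) c(2) fam_ids(8)] by blast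
  have Y: "nyldon (Yf i)" using ML2'[OF assms(9,10,11,8) c(3) fam_ids(9)] by blast
  have "nyldon (Pv i)" using ML2'[OF assms(2,3,6) Y c(4) fam_ids(10)] by blast
  then show ?thesis using L S by blast
qed

definition Inv :: "nat \<Rightarrow> bool" where
  "Inv i \<longleftrightarrow> nyldon (Uf i) \<and> std_is (Uf i) (P i) \<and> nyldon (Qf i) \<and> nyldon (Zf i) \<and> std_is (Zf i) (P i)
     \<and> nyldon (Lf i) \<and> nyldon (Sf i) \<and> nyldon (Pv i) \<and> nyldon (P i)"

lemma P_Suc: "i \<ge> 1 \<Longrightarrow> P (Suc i) = Pv i"
  unfolding P_def by simp

lemma Inv_step:
  assumes i: "i \<ge> 1" and I: "Inv i"
  shows "Inv (Suc i)"
proof -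
  note c = cmp_all[OF i]
  have U: "nyldon (Uf i)" "std_is (Uf i) (P i)" and Q: "nyldon (Qf i)" and Z: "nyldon (Zf i)" "std_is (Zf i) (P i)"
    and L: "nyldon (Lf i)" and S: "nyldon (Sf i)" and Pv: "nyldon (Pv i)"
    using I unfolding Inv_def by auto
  have lePZ: "lex_le (P i) (Zf i)" using P_lt[OF i] unfolding Zf_def by (simp add: lex_less_imp_le)
  have lePPv: "lex_le (P i) (Pv i)" using P_lt[OF i] unfolding Pv_def by (simp add: lex_less_imp_le)
  have lePQ: "lex_le (P i) (Qf i)" using P_lt[OF i, of "[]"] unfolding Qf_def by (simp add: lex_less_imp_le)
  have lePS: "lex_le (P i) (Sf i)" using P_lt[OF i] unfolding Sf_def by (simp add: lex_less_imp_le)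
  have X: "nyldon (Xf i) \<and> std_is (Xf i) (Zf i)" using ML2'[OF U lePZ Z(1) c(5)] Xf_def by blast
  have W1: "nyldon (Wf (Suc i))"
    using ML2'[OF X[THEN conjunct1] X[THEN conjunct2] lex_less_imp_le[OF c(9)] L c(6) fam_ids(4)] by blast
  have R1: "nyldon (Rf (Suc i))"
    using ML2'[OF X[THEN conjunct1] X[THEN conjunct2] lex_less_imp_le[OF c(10)] S c(7) fam_ids(5)] by blast
  have Z1: "nyldon (Zf (Suc i)) \<and> std_is (Zf (Suc i)) (Pv i)"
    using ML2'[OF X[THEN conjunct1] X[THEN conjunct2] lex_less_imp_le[OF c(11)] Pv c(8) fam_ids(6)] .
  have U1: "nyldon (Uf (Suc i)) \<and> std_is (Uf (Suc i)) (Pv i)"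
    using ML2'[OF U lePPv Pv c(12) fam_ids(1)] .
  have Q1: "nyldon (Qf (Suc i))" using ML2'[OF U lePQ Q c(13) fam_ids(2)] by blast
  have V1: "nyldon (Vf (Suc i)) \<and> std_is (Vf (Suc i)) (Sf i)" using ML2'[OF U lePS S c(14) fam_ids(3)] .
  have i1: "Suc i \<ge> 1" by simp
  have PS: "P (Suc i) = Pv i" using P_Suc[OF i] .
  have "nyldon (Lf (Suc i)) \<and> nyldon (Sf (Suc i)) \<and> nyldon (Pv (Suc i))"
  proof (rule step_common[OF i1 V1[THEN conjunct1] V1[THEN conjunct2]])
    show "lex_le (Sf i) (Wf (Suc i))" using S_lt unfolding Wf_def by (simp add: lex_less_imp_le)
    show "lex_le (Sf i) (Rf (Suc i))" using S_lt unfolding Rf_def by (simp add: lex_less_imp_le)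
    show "lex_le (Sf i) (Yf (Suc i))" using S_lt unfolding Yf_def by (simp add: lex_less_imp_le)
    show "nyldon (Wf (Suc i))" by (rule W1)
    show "nyldon (Rf (Suc i))" by (rule R1)
    show "nyldon (Zf (Suc i))" using Z1 by blast
    show "std_is (Zf (Suc i)) (P (Suc i))" using Z1 PS by simp
    show "lex_le (P (Suc i)) (Rf (Suc i))" using P_lt[OF i1] unfolding Rf_def by (simp add: lex_less_imp_le)
  qed
  then show ?thesis unfolding Inv_def using U1 Q1 Z1 PS Pv by simp
qed



lemma lt_simp_helper: "lex_le x y \<longleftrightarrow> lex_less x y \<or> x = y" by (simp add: lex_le_def)

lemma n_ba: "nyldon [b,a] \<and> std_is [b,a] [a]"
  by (rule ML2l[of "[b]" b]) auto
lemma n_bab: "nyldon [b,a,b] \<and> std_is [b,a,b] [b]"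
  by (rule ML2'[OF n_ba[THEN conjunct1] n_ba[THEN conjunct2]]) (auto simp: lex_le_def)
lemma n_baa: "nyldon [b,a,a] \<and> std_is [b,a,a] [a]"
  by (rule ML2'[OF n_ba[THEN conjunct1] n_ba[THEN conjunct2]]) (auto simp: lex_le_def)
lemma n_baab: "nyldon [b,a,a,b] \<and> std_is [b,a,a,b] [b]"
  by (rule ML2'[OF n_baa[THEN conjunct1] n_baa[THEN conjunct2]]) (auto simp: lex_le_def)
lemma n_P1: "nyldon [b,a,a,b,b,a,a] \<and> std_is [b,a,a,b,b,a,a] [b,a,a]"
  by (rule ML2'[OF n_baab[THEN conjunct1] n_baab[THEN conjunct2] _ n_baa[THEN conjunct1]]) (auto simp: lex_le_def)
lemma n_Q1: "nyldon [b,a,b,b,a] \<and> std_is [b,a,b,b,a] [b,a]"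
  by (rule ML2'[OF n_bab[THEN conjunct1] n_bab[THEN conjunct2] _ n_ba[THEN conjunct1]]) (auto simp: lex_le_def)
lemma n_U1: "nyldon [b,a,b,b,a,b,a,a,b,b,a,a] \<and> std_is [b,a,b,b,a,b,a,a,b,b,a,a] [b,a,a,b,b,a,a]"
  by (rule ML2'[OF n_Q1[THEN conjunct1] n_Q1[THEN conjunct2] _ n_P1[THEN conjunct1]]) (auto simp: lex_le_def)
lemma n_V1: "nyldon [b,a,b,b,a,b,a,a] \<and> std_is [b,a,b,b,a,b,a,a] [b,a,a]"
  by (rule ML2'[OF n_Q1[THEN conjunct1] n_Q1[THEN conjunct2] _ n_baa[THEN conjunct1]]) (auto simp: lex_le_def)
lemma n_baabba: "nyldon [b,a,a,b,b,a] \<and> std_is [b,a,a,b,b,a] [b,a]"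
  by (rule ML2'[OF n_baab[THEN conjunct1] n_baab[THEN conjunct2] _ n_ba[THEN conjunct1]]) (auto simp: lex_le_def)
lemma n_w1: "nyldon [b,a,a,b,b,a,b,a,a,b] \<and> std_is [b,a,a,b,b,a,b,a,a,b] [b,a,a,b]"
  by (rule ML2'[OF n_baabba[THEN conjunct1] n_baabba[THEN conjunct2] _ n_baab[THEN conjunct1]]) (auto simp: lex_le_def)
lemma n_W1: "nyldon [b,a,b,b,a,a,b,b,a,b,a,a,b] \<and> std_is [b,a,b,b,a,a,b,b,a,b,a,a,b] [b,a,a,b,b,a,b,a,a,b]"
  by (rule ML2'[OF n_bab[THEN conjunct1] n_bab[THEN conjunct2] _ n_w1[THEN conjunct1]]) (auto simp: lex_le_def)
lemma n_r1: "nyldon [b,a,a,b,b,a,b,a,a] \<and> std_is [b,a,a,b,b,a,b,a,a] [b,a,a]"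
  by (rule ML2'[OF n_baabba[THEN conjunct1] n_baabba[THEN conjunct2] _ n_baa[THEN conjunct1]]) (auto simp: lex_le_def)
lemma n_R1: "nyldon [b,a,b,b,a,a,b,b,a,b,a,a] \<and> std_is [b,a,b,b,a,a,b,b,a,b,a,a] [b,a,a,b,b,a,b,a,a]"
  by (rule ML2'[OF n_bab[THEN conjunct1] n_bab[THEN conjunct2] _ n_r1[THEN conjunct1]]) (auto simp: lex_le_def)
lemma n_z1: "nyldon [b,a,b,b,a,a,b,b,a] \<and> std_is [b,a,b,b,a,a,b,b,a] [b,a,a,b,b,a]"
  by (rule ML2'[OF n_bab[THEN conjunct1] n_bab[THEN conjunct2] _ n_baabba[THEN conjunct1]]) (auto simp: lex_le_def)
lemma n_Z1: "nyldon [b,a,b,b,a,a,b,b,a,b,a,a,b,b,a,a] \<and> std_is [b,a,b,b,a,a,b,b,a,b,a,a,b,b,a,a] [b,a,a,b,b,a,a]"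
  by (rule ML2'[OF n_z1[THEN conjunct1] n_z1[THEN conjunct2] _ n_P1[THEN conjunct1]]) (auto simp: lex_le_def)

lemma P_1: "P 1 = [b,a,a,b,b,a,a]" unfolding P_def by simp
lemma P_1': "P (Suc 0) = [b,a,a,b,b,a,a]" unfolding P_def by simp

lemma Inv_1: "Inv 1"
proof -
  have U: "Uf 1 = [b,a,b,b,a,b,a,a,b,b,a,a]" unfolding Uf_def tt_1 cc_1 cp_1 by simp
  have Q: "Qf 1 = [b,a,b,b,a]" unfolding Qf_def tt_1 by simp
  have V: "Vf 1 = [b,a,b,b,a,b,a,a]" unfolding Vf_def tt_1 cp_1 by simp
  have W: "Wf 1 = [b,a,b,b,a,a,b,b,a,b,a,a,b]" unfolding Wf_def tt_1 cc_1 by simp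
  have R: "Rf 1 = [b,a,b,b,a,a,b,b,a,b,a,a]" unfolding Rf_def tt_1 cp_1 by simp
  have Z: "Zf 1 = [b,a,b,b,a,a,b,b,a,b,a,a,b,b,a,a]" unfolding Zf_def tt_1 cc_1 cp_1 by simp
  have one: "(1::nat) \<ge> 1" by simp
  have "nyldon (Lf 1) \<and> nyldon (Sf 1) \<and> nyldon (Pv 1)"
  proof (rule step_common[OF one])
    show "nyldon (Vf 1)" using n_V1 V by simp
    show "std_is (Vf 1) [b,a,a]" using n_V1 V by simp
    show "lex_le [b,a,a] (Wf 1)" using baa_lt[of 0] unfolding Wf_def by (simp add: lex_less_imp_le)
    show "lex_le [b,a,a] (Rf 1)" using baa_lt[of 0] unfolding Rf_def by (simp add: lex_less_imp_le)
    show "lex_le [b,a,a] (Yf 1)" using baa_lt[of 0] unfolding Yf_def by (simp add: lex_less_imp_le)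
    show "nyldon (Wf 1)" using n_W1 W by simp
    show "nyldon (Rf 1)" using n_R1 R by simp
    show "nyldon (Zf 1)" using n_Z1 Z by simp
    show "std_is (Zf 1) (P 1)" using n_Z1 Z P_1 by simp
    show "lex_le (P 1) (Rf 1)" using P_lt[OF one] unfolding Rf_def by (simp add: lex_less_imp_le)
  qed
  then show ?thesis unfolding Inv_def using U Q Z P_1 n_U1 n_Q1 n_Z1 n_P1 by simp
qed

lemma Inv_all: "i \<ge> 1 \<Longrightarrow> Inv i"
proof (induction i rule: dec_induct)
  case base then show ?case using Inv_1 by simp
next
  case (step n) then show ?case using Inv_step by simp
qed

lemma nyldon_P: "j \<ge> 1 \<Longrightarrow> nyldon (P j)"
  using Inv_all unfolding Inv_def by blast

definition ell :: "nat \<Rightarrow> letter list list" where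
  "ell n = [[a],[b],[b,a]] @ map P [1..<n]"

lemma ell_props:
  assumes "n \<ge> 1"
  shows "successively lex_le (ell n) \<and> last (ell n) = (if n = 1 then [b,a] else P (n - 1))
     \<and> (\<forall>g\<in>set (ell n). nyldon g)"
  using assms
proof (induction n rule: dec_induct)
  case base
  then show ?case using n_ba by (simp add: ell_def lex_le_def)
next
  case (step n)
  have e: "ell (Suc n) = ell n @ [P n]" using step.hyps unfolding ell_def by simp
  have le: "lex_le (last (ell n)) (P n)"
  proof (cases "n = 1")
    case True then show ?thesis using step.IH P_1' by (simp add: lex_le_def)
  next
    case False
    then obtain m where m: "n = Suc m" "m \<ge> 1" using step.hyps by (cases n) auto
    have "P n = Pv m" using P_Suc[OF m(2)] m by simp
    then have "lex_less (P m) (P n)" using P_lt[OF m(2)] unfolding Pv_def by simp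
    then show ?thesis using step.IH m by (simp add: lex_less_imp_le)
  qed
  have "nyldon (P n)" using nyldon_P step.hyps by simp
  then show ?case using step.IH le e step.hyps by (auto simp: successively_append_iff)
qed

lemma concat_ell: "j \<ge> 1 \<Longrightarrow> concat (ell (Suc j)) = tl (Uf j)"
proof (induction j rule: dec_induct)
  case base
  show ?case unfolding ell_def Uf_def tt_1 cc_1 cp_1 by (simp add: P_1')
next
  case (step n)
  have e: "ell (Suc (Suc n)) = ell (Suc n) @ [P (Suc n)]" unfolding ell_def by simp
  have "P (Suc n) = Pv n" using P_Suc step.hyps by simp
  then show ?case using e step.IH fam_ids(1)[of n] by (simp add: Uf_def)
qed

lemma TM_even: "TM (2 * Suc i) = tl (Uf i) @ Qf i"
proof -
  have "TM (2 * Suc i) = tt (Suc i)" unfolding tt_def ..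
  then show ?thesis unfolding Uf_def Qf_def tt_Suc by (simp add: cc_last)
qed

lemma TM_odd: "TM (Suc (2 * Suc i)) = tl (Uf i) @ Lf i"
proof -
  have "TM (Suc (2 * Suc i)) = tt (Suc i) @ cc (Suc i)" unfolding tt_def cc_def by simp
  then show ?thesis unfolding Uf_def Lf_def tt_Suc cc_Suc by (simp add: cc_last)
qed

lemma SF_even:
  assumes "i \<ge> 1"
  shows "SF (TM (2 * Suc i)) (ell (Suc i) @ [Qf i])"
proof -
  note E = ell_props[of "Suc i"]
  have lst: "last (ell (Suc i)) = P i" using E assms by simp
  have "lex_le (P i) (Qf i)" using P_lt[OF assms, of "[]"] unfolding Qf_def by (simp add: lex_less_imp_le)
  moreover have "nyldon (Qf i)" using Inv_all[OF assms] unfolding Inv_def by blast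
  ultimately show ?thesis unfolding SF_snoc using E lst concat_ell[OF assms] TM_even[of i]
    unfolding SF_def by (auto simp: ell_def)
qed

lemma SF_odd:
  assumes "i \<ge> 1"
  shows "SF (TM (Suc (2 * Suc i))) (ell (Suc i) @ [Lf i])"
proof -
  note E = ell_props[of "Suc i"]
  have lst: "last (ell (Suc i)) = P i" using E assms by simp
  have "lex_le (P i) (Lf i)" using P_lt[OF assms] unfolding Lf_def by (simp add: lex_less_imp_le)
  moreover have "nyldon (Lf i)" using Inv_all[OF assms] unfolding Inv_def by blast
  ultimately show ?thesis unfolding SF_snoc using E lst concat_ell[OF assms] TM_odd[of i]
    unfolding SF_def by (auto simp: ell_def)
qed

lemma SF_TM3: "SF (TM 3) [[a],[b],[b,a],[b,a,a,b]]"
proof -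
  have "TM 3 = [a,b,b,a,b,a,a,b]" by (simp add: numeral_3_eq_3)
  then show ?thesis unfolding SF_def using n_ba n_baab by (simp add: lex_le_def)
qed



lemma ell_Suc: "m \<ge> 1 \<Longrightarrow> ell (Suc m) = ell m @ [P m]"
  unfolding ell_def by simp

lemma main_m:
  assumes m: "m \<ge> 1" and xs: "xs = ell m @ [L]" and L: "L @ cp m = P m"
  shows "is_nyldon_fact (TM (2 * Suc m))
           (butlast xs @ [last xs @ butlast (compl (TM (2 * m))), b # TM (2 * m)])
       \<and> is_nyldon_fact (TM (Suc (2 * Suc m)))
           (butlast xs @ [last xs @ butlast (compl (TM (2 * m))),
                          b # TM (2 * m) @ compl (TM (2 * Suc m))])"
proof -
  have cpm: "butlast (compl (TM (2 * m))) = cp m" unfolding cp_def cc_def ..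
  have q: "b # TM (2 * m) = Qf m" unfolding Qf_def tt_def ..
  have l: "b # TM (2 * m) @ compl (TM (2 * Suc m)) = Lf m"
  proof -
    have "compl (TM (2 * Suc m)) = cc (Suc m)" unfolding cc_def ..
    moreover have "TM (2 * m) = tt m" unfolding tt_def ..
    ultimately show ?thesis unfolding Lf_def cc_Suc by simp
  qed
  have e1: "butlast xs @ [last xs @ butlast (compl (TM (2 * m))), b # TM (2 * m)] = ell (Suc m) @ [Qf m]"
    unfolding xs cpm q ell_Suc[OF m] using L by simp
  have e2: "butlast xs @ [last xs @ butlast (compl (TM (2 * m))), b # TM (2 * m) @ compl (TM (2 * Suc m))]
      = ell (Suc m) @ [Lf m]"
    unfolding xs cpm l ell_Suc[OF m] using L by simp
  show ?thesis unfolding e1 e2 SF_iff using SF_even[OF m] SF_odd[OF m] by blast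
qed

theorem theorem4:
  fixes k :: nat and xs :: "letter list list"
  assumes "k \<ge> 2"
    and "is_nyldon_fact (TM (2*k - 1)) xs"
  shows "is_nyldon_fact (TM (2*k))
           (butlast xs @ [last xs @ butlast (compl (TM (2*k - 2))), b # TM (2*k - 2)])
       \<and> is_nyldon_fact (TM (2*k + 1))
           (butlast xs @ [last xs @ butlast (compl (TM (2*k - 2))),
                          b # TM (2*k - 2) @ compl (TM (2*k))])"
proof -
  obtain m where k: "k = Suc m" and m: "m \<ge> 1" using assms(1) by (cases k) auto
  have i1: "2 * k - 1 = Suc (2 * m)" "2 * k - 2 = 2 * m" "2 * k = 2 * Suc m" "2 * k + 1 = Suc (2 * Suc m)"
    using k by auto
  have sf: "SF (TM (Suc (2 * m))) xs" using assms(2) i1(1) SF_iff by simp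
  have "\<exists>L. xs = ell m @ [L] \<and> L @ cp m = P m"
  proof (cases "m = 1")
    case True
    have "SF (TM (Suc (2 * m))) (ell m @ [[b,a,a,b]])"
      using SF_TM3 True by (simp add: ell_def numeral_3_eq_3)
    then have "xs = ell m @ [[b,a,a,b]]" using SF_unique sf by blast
    moreover have "[b,a,a,b] @ cp m = P m" using True cp_1 P_1 by simp
    ultimately show ?thesis by blast
  next
    case False
    then obtain i where i: "m = Suc i" "i \<ge> 1" using m by (cases m) auto
    have "SF (TM (Suc (2 * m))) (ell m @ [Lf i])" using SF_odd[OF i(2)] i(1) by simp
    then have "xs = ell m @ [Lf i]" using SF_unique sf by blast
    moreover have "Lf i @ cp m = P m"
      using i P_Suc[OF i(2)] unfolding Lf_def Pv_def by (simp add: cp_Suc cc_last)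
    ultimately show ?thesis by blast
  qed
  then obtain L where L1: "xs = ell m @ [L]" and L2: "L @ cp m = P m" by blast
  have e: "2 * Suc m - 2 = 2 * m" "2 * Suc m + 1 = Suc (2 * Suc m)" by auto
  show ?thesis unfolding k e by (rule main_m[OF m L1 L2])
qed


end
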